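(* For all $\epsilon>0$ and $k\in\mathbb{N}$, let $d=d(\epsilon)=40\epsilon^{-2}$ and $N=N(\epsilon,k)=32k\epsilon^{-2}$. Let $D$ be a digraph on at least $N$ vertices. Then there is a $(k,d)$-connected subset $A\subseteq V(D)$ with $|A|\geq\delta^+(D)-\epsilon|D|$.
   Context: Digraphs are finite, without loops and without multiple edges (an edge may appear in both directions). A path is a sequence of distinct vertices $x_1,\dots,x_t$ with each $x_ix_{i+1}$ a directed edge; its length is its number of edges. For an uncoloured digraph $D$, a set $A\subseteq V(D)$ is $(k,d)$-connected in $D$ if for every $S\subseteq V(D)$ with $|S|\leq k-1$ and all $x,y\in A\setminus S$ there is a path from $x$ to $y$ in $D$ of length at most $d$ containing no vertex of $S$. $\delta^+(D)$ is the minimum out-degree and $|D|$ the number of vertices. *)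

theory Defs
  imports Complex_Main
begin

definition digraph :: "'a set \<Rightarrow> ('a \<times> 'a) set \<Rightarrow> bool" where
  "digraph V E \<longleftrightarrow> finite V \<and> E \<subseteq> V \<times> V \<and> (\<forall>x. (x, x) \<notin> E)"

text \<open>A path: a nonempty list of distinct vertices, consecutive ones joined by directed edges.
  Its length is the number of edges, i.e. length of the list minus one.\<close>
definition is_path :: "('a \<times> 'a) set \<Rightarrow> 'a list \<Rightarrow> bool" where
  "is_path E xs \<longleftrightarrow> xs \<noteq> [] \<and> distinct xs \<and>
     (\<forall>i. i + 1 < length xs \<longrightarrow> (xs ! i, xs ! (i + 1)) \<in> E)"

definition kd_connected :: "'a set \<Rightarrow> ('a \<times> 'a) set \<Rightarrow> nat \<Rightarrow> real \<Rightarrow> 'a set \<Rightarrow> bool" where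
  "kd_connected V E k d A \<longleftrightarrow>
     (\<forall>S. S \<subseteq> V \<longrightarrow> card S + 1 \<le> k \<longrightarrow>
        (\<forall>x \<in> A - S. \<forall>y \<in> A - S. \<exists>xs. is_path E xs \<and> hd xs = x \<and> last xs = y \<and>
            real (length xs - 1) \<le> d \<and> set xs \<inter> S = {}))"

definition out_degree :: "('a \<times> 'a) set \<Rightarrow> 'a \<Rightarrow> nat" where
  "out_degree E x = card {y. (x, y) \<in> E}"

definition min_out_degree :: "'a set \<Rightarrow> ('a \<times> 'a) set \<Rightarrow> nat" where
  "min_out_degree V E = Min (out_degree E ` V)"

end

theory Submission imports Defs begin

definition rball :: "('a \<times> 'a) set \<Rightarrow> 'a set \<Rightarrow> 'a \<Rightarrow> nat \<Rightarrow> 'a set" where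
  "rball E U x t = {v. \<exists>xs. is_path E xs \<and> hd xs = x \<and> last xs = v \<and> length xs \<le> t + 1 \<and> set xs \<subseteq> U}"

lemma rball_mono: "t \<le> t' \<Longrightarrow> rball E U x t \<subseteq> rball E U x t'"
  unfolding rball_def by fastforce

lemma rball_0: "x \<in> U \<Longrightarrow> x \<in> rball E U x 0"
  unfolding rball_def by (rule CollectI, rule exI[of _ "[x]"]) (simp add: is_path_def)

lemma rball_sub: "rball E U x t \<subseteq> U"
  unfolding rball_def by (auto simp: is_path_def)

lemma rball_step:
  assumes "v \<in> rball E U x t" "(v,u) \<in> E" "u \<in> U"
  shows "u \<in> rball E U x (Suc t)"
proof -
  obtain xs where xs: "is_path E xs" "hd xs = x" "last xs = v" "length xs \<le> t + 1" "set xs \<subseteq> U"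
    using assms(1) unfolding rball_def by blast
  show ?thesis
  proof (cases "u \<in> set xs")
    case True
    then obtain i where i: "i < length xs" "xs ! i = u" by (metis in_set_conv_nth)
    let ?ys = "take (Suc i) xs"
    have "is_path E ?ys" using xs(1) i unfolding is_path_def by auto
    moreover have "hd ?ys = x" using xs i by (metis hd_take zero_less_Suc)
    moreover have "last ?ys = u" using i by (simp add: take_Suc_conv_app_nth)
    moreover have "length ?ys \<le> Suc t + 1" using xs(4) by simp
    moreover have "set ?ys \<subseteq> U" using xs(5) by (meson order.trans set_take_subset)
    ultimately show ?thesis unfolding rball_def by blast
  next
    case False
    let ?ys = "xs @ [u]"
    have ne: "xs \<noteq> []" using xs(1) by (simp add: is_path_def)
    have "is_path E ?ys" unfolding is_path_def
    proof (intro conjI allI impI)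
      show "distinct ?ys" using xs(1) False by (simp add: is_path_def)
      fix j assume j: "j + 1 < length ?ys"
      show "(?ys ! j, ?ys ! (j+1)) \<in> E"
      proof (cases "j + 1 < length xs")
        case True then show ?thesis using xs(1) by (simp add: is_path_def nth_append)
      next
        case False
        then have "j + 1 = length xs" using j by simp
        moreover have "xs ! j = v" using xs(3) ne \<open>j+1 = length xs\<close> by (metis add_diff_cancel_right' last_conv_nth)
        ultimately show ?thesis using assms(2) by (simp add: nth_append)
      qed
    qed simp
    moreover have "hd ?ys = x" using xs ne by simp
    moreover have "last ?ys = u" by simp
    moreover have "length ?ys \<le> Suc t + 1" using xs(4) by simp
    moreover have "set ?ys \<subseteq> U" using xs(5) assms(3) by simp
    ultimately show ?thesis unfolding rball_def by blast
  qed
qed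
lemma exists_thin:
  assumes "finite V" "U \<subseteq> V" "x \<in> U" "L > 0"
  shows "\<exists>t<L. real (card (rball E U x (Suc t))) - real (card (rball E U x t)) \<le> real (card V) / real L"
proof (rule ccontr)
  assume "\<not> ?thesis"
  hence H: "\<And>t. t < L \<Longrightarrow> real (card (rball E U x (Suc t))) - real (card (rball E U x t)) > real (card V) / real L"
    by force
  have fin: "\<And>t. finite (rball E U x t)" using rball_sub assms(1,2) by (meson finite_subset subset_trans)
  have "\<And>t. t \<le> L \<Longrightarrow> real (card (rball E U x t)) \<ge> 1 + real t * (real (card V) / real L)"
  proof -
    fix t show "t \<le> L \<Longrightarrow> real (card (rball E U x t)) \<ge> 1 + real t * (real (card V) / real L)"
    proof (induction t)
      case 0
      have "x \<in> rball E U x 0" using rball_0 assms(3) .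
      then have "card (rball E U x 0) \<ge> 1" using fin by (metis One_nat_def Suc_leI card_gt_0_iff empty_iff)
      then show ?case by simp
    next
      case (Suc t)
      then have "t < L" by simp
      from H[OF this] Suc have "real (card (rball E U x (Suc t))) \<ge> 1 + real t * (real (card V) / real L) + real (card V) / real L"
        by simp
      then show ?case by (simp add: algebra_simps add_divide_distrib)
    qed
  qed
  from this[of L] have "real (card (rball E U x L)) \<ge> 1 + real (card V)" using assms(4) by simp
  moreover have "card (rball E U x L) \<le> card V" using rball_sub assms(1,2) by (meson card_mono subset_trans)
  ultimately show False by linarith
qed

lemma card_filter_sum: "finite W \<Longrightarrow> card {z\<in>W. P z} = (\<Sum>z\<in>W. if P z then 1 else (0::nat))"
  by (simp add: sum.If_cases Int_def)

lemma double_count: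
  assumes "finite W"
  shows "(\<Sum>y\<in>W. card {z\<in>W. (z,y)\<in>E}) = (\<Sum>z\<in>W. card {y\<in>W. (z,y)\<in>E})"
proof -
  have "(\<Sum>y\<in>W. card {z\<in>W. (z,y)\<in>E}) = (\<Sum>y\<in>W. \<Sum>z\<in>W. if (z,y)\<in>E then 1 else (0::nat))"
    using assms card_filter_sum by (intro sum.cong) auto
  also have "\<dots> = (\<Sum>z\<in>W. \<Sum>y\<in>W. if (z,y)\<in>E then 1 else (0::nat))"
    by (rule sum.swap)
  also have "\<dots> = (\<Sum>z\<in>W. card {y\<in>W. (z,y)\<in>E})"
    using assms card_filter_sum[symmetric] by (intro sum.cong) auto
  finally show ?thesis .
qed

theorem mainTheorem6:
  fixes \<epsilon> :: real and k :: nat and V :: "'a set" and E :: "('a \<times> 'a) set"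
  assumes "\<epsilon> > 0"
    and "digraph V E"
    and "V \<noteq> {}"
    and "real (card V) \<ge> 32 * real k / \<epsilon>\<^sup>2"
  shows "\<exists>A \<subseteq> V. kd_connected V E k (40 / \<epsilon>\<^sup>2) A \<and>
           real (card A) \<ge> real (min_out_degree V E) - \<epsilon> * real (card V)"
proof -
  have finV: "finite V" and EV: "E \<subseteq> V \<times> V" using assms(2) unfolding digraph_def by auto
  define n where "n = card V"
  have npos: "n > 0" using finV assms(3) n_def by (simp add: card_gt_0_iff)
  define \<delta> where "\<delta> = min_out_degree V E"
  define N where "N w = {y. (w,y) \<in> E}" for w
  have NV: "N w \<subseteq> V" for w using EV unfolding N_def by auto
  have finN: "finite (N w)" for w using NV finV finite_subset by blast
  have \<delta>le: "\<delta> \<le> card (N w)" if "w \<in> V" for w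
    unfolding \<delta>_def min_out_degree_def out_degree_def N_def using finV that by simp
  show ?thesis
  proof (cases "\<epsilon> \<ge> 1")
    case True
    obtain v where v: "v \<in> V" using assms(3) by blast
    have "card (N v) \<le> n" using NV finV n_def card_mono by blast
    then have "real \<delta> \<le> real n" using \<delta>le[OF v] by simp
    also have "\<dots> \<le> \<epsilon> * real n" using True mult_right_mono[of 1 \<epsilon> "real n"] by simp
    finally have "real (card {}) \<ge> real \<delta> - \<epsilon> * real n" by simp
    moreover have "kd_connected V E k (40 / \<epsilon>\<^sup>2) {}" unfolding kd_connected_def by simp
    ultimately show ?thesis unfolding \<delta>_def n_def by blast
  next
    case False
    then have e1: "\<epsilon> < 1" by simp
    define L where "L = nat \<lceil>8 / \<epsilon>\<^sup>2\<rceil>"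
    have e2pos: "\<epsilon>\<^sup>2 > 0" using assms(1) by simp
    have Lr: "real L = of_int \<lceil>8 / \<epsilon>\<^sup>2\<rceil>"
    proof -
      have "8 / \<epsilon>\<^sup>2 > 0" using e2pos by simp
      then have "0 \<le> \<lceil>8 / \<epsilon>\<^sup>2\<rceil>" by linarith
      then show ?thesis unfolding L_def by simp
    qed
    have L1: "real L \<ge> 8 / \<epsilon>\<^sup>2" using Lr by simp
    have L2: "real L < 8 / \<epsilon>\<^sup>2 + 1" using Lr ceiling_correct[of "8 / \<epsilon>\<^sup>2"] by linarith
    have Lpos: "L > 0" using L1 e2pos
      by (metis divide_pos_pos gr0I of_nat_0 order.strict_trans1 zero_less_numeral not_less)
    have Ld: "real L + 1 \<le> 40 / \<epsilon>\<^sup>2"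
    proof -
      have "\<epsilon>\<^sup>2 < 1" using e1 assms(1) by (simp add: power_less_one_iff)
      then have "2 \<le> 32 / \<epsilon>\<^sup>2" using e2pos by (simp add: field_simps)
      then show ?thesis using L2 by simp
    qed
    define c where "c = 2 * (real k + real n / real L) / (\<epsilon> * real n)"
    have cpos: "c \<ge> 0" unfolding c_def using assms(1) npos by simp
    have cgap: "c * (\<epsilon> * real n / 2) = real k + real n / real L"
      unfolding c_def using assms(1) npos by (simp add: field_simps)
    define good where "good W \<longleftrightarrow> W \<subseteq> V \<and> W \<noteq> {} \<and>
        (\<forall>w\<in>W. real (card (N w - W)) \<le> c * (real n - real (card W)))" for W
    have "good V" unfolding good_def using assms(3) NV n_def by (simp add: Diff_eq_empty_iff[THEN iffD2])
    then obtain W where gW: "good W" and minW: "\<And>W'. good W' \<Longrightarrow> card W \<le> card W'"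
      using ex_has_least_nat[of good V card] by blast
    have WV: "W \<subseteq> V" and Wne: "W \<noteq> {}"
      and Wcl: "\<And>w. w \<in> W \<Longrightarrow> real (card (N w - W)) \<le> c * (real n - real (card W))"
      using gW unfolding good_def by auto
    have finW: "finite W" using WV finV finite_subset by blast
    have cardWn: "card W \<le> n" using WV finV n_def card_mono by blast
    have key: "real (card (W - rball E (W - S) x L)) < \<epsilon> * real n / 2"
      if S: "S \<subseteq> V" "card S \<le> k" and x: "x \<in> W - S" for S x
    proof -
      let ?B = "rball E (W - S) x"
      have finB: "finite (?B t)" for t using rball_sub[of E "W - S" x t] finW finite_subset by blast
      have BW: "?B t \<subseteq> W" for t using rball_sub[of E "W - S" x t] by blast
      obtain t where t: "t < L" "real (card (?B (Suc t))) - real (card (?B t)) \<le> real n / real L"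
        using exists_thin[of V "W - S" x L E] finV WV x Lpos n_def by auto
      have small: "real (card (W - ?B t)) < \<epsilon> * real n / 2"
      proof (rule ccontr)
        assume big: "\<not> ?thesis"
        have cd: "card (W - ?B t) = card W - card (?B t)" using finB BW by (simp add: card_Diff_subset)
        have cle: "card (?B t) \<le> card W" using BW finW card_mono by blast
        have "good (?B t)" unfolding good_def
        proof (intro conjI ballI)
          show "?B t \<subseteq> V" using BW WV by blast
          show "?B t \<noteq> {}" using rball_0[OF x, of E] rball_mono[of 0 t E "W - S" x] by blast
          fix r assume r: "r \<in> ?B t"
          have sub: "N r - ?B t \<subseteq> (N r - W) \<union> S \<union> (?B (Suc t) - ?B t)"
          proof
            fix u assume u: "u \<in> N r - ?B t"
            show "u \<in> (N r - W) \<union> S \<union> (?B (Suc t) - ?B t)"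
            proof (cases "u \<in> W - S")
              case True
              then have "u \<in> ?B (Suc t)" using rball_step[OF r, of u] u unfolding N_def by blast
              then show ?thesis using u by blast
            qed (use u in blast)
          qed
          have finS: "finite S" using S finV finite_subset by blast
          have "card (N r - ?B t) \<le> card ((N r - W) \<union> S \<union> (?B (Suc t) - ?B t))"
            using sub finN finS finB by (intro card_mono) auto
          also have "\<dots> \<le> card (N r - W) + card S + card (?B (Suc t) - ?B t)"
            by (meson add_le_mono card_Un_le le_refl order_trans)
          finally have c1: "real (card (N r - ?B t)) \<le> real (card (N r - W)) + real (card S) + real (card (?B (Suc t) - ?B t))"
            by linarith
          have c2: "real (card (?B (Suc t) - ?B t)) \<le> real n / real L"
            using t(2) finB rball_mono[of t "Suc t" E "W - S" x]
            by (simp add: card_Diff_subset of_nat_diff card_mono)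
          have rW: "r \<in> W" using r BW by blast
          have c3: "c * (real n - real (card W)) + real k + real n / real L \<le> c * (real n - real (card (?B t)))"
          proof -
            have "real (card W) - real (card (?B t)) \<ge> \<epsilon> * real n / 2" using big cd cle by simp
            then have "c * (real (card W) - real (card (?B t))) \<ge> c * (\<epsilon> * real n / 2)"
              using cpos mult_left_mono by blast
            then have "c * real (card W) - c * real (card (?B t)) \<ge> real k + real n / real L"
              using cgap by (simp only: right_diff_distrib)
            then show ?thesis by (simp add: right_diff_distrib)
          qed
          show "real (card (N r - ?B t)) \<le> c * (real n - real (card (?B t)))"
            using c1 c2 c3 Wcl[OF rW] S(2) by linarith
        qed
        then have "card W \<le> card (?B t)" using minW by blast
        moreover have "card (W - ?B t) > 0"
        proof -
          have "\<epsilon> * real n / 2 > 0" using assms(1) npos by simp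
          then have "real (card (W - ?B t)) > 0" using big by linarith
          then show ?thesis by simp
        qed
        ultimately show False using cd by linarith
      qed
      have "card (W - ?B L) \<le> card (W - ?B t)"
        using finW rball_mono[of t L E "W - S" x] t(1) by (intro card_mono) auto
      then show ?thesis using small by linarith
    qed
    define A where "A = {y\<in>W. real (card {z\<in>W. (z,y)\<in>E}) \<ge> \<epsilon> * real n / 2}"
    have AW: "A \<subseteq> W" unfolding A_def by blast
    have conn: "kd_connected V E k (40 / \<epsilon>\<^sup>2) A"
      unfolding kd_connected_def
    proof (intro allI impI ballI)
      fix S x y assume S: "S \<subseteq> V" "card S + 1 \<le> k" and x: "x \<in> A - S" and y: "y \<in> A - S"
      let ?B = "rball E (W - S) x"
      have xW: "x \<in> W - S" and yW: "y \<in> W - S" using x y AW by auto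
      have k1: "real (card (W - ?B L)) < \<epsilon> * real n / 2" using key[OF S(1) _ xW] S(2) by simp
      have iy: "real (card {z\<in>W. (z,y)\<in>E}) \<ge> \<epsilon> * real n / 2" using y unfolding A_def by blast
      have "\<not> {z\<in>W. (z,y)\<in>E} \<subseteq> W - ?B L"
      proof
        assume "{z\<in>W. (z,y)\<in>E} \<subseteq> W - ?B L"
        then have "card {z\<in>W. (z,y)\<in>E} \<le> card (W - ?B L)" using finW by (intro card_mono) auto
        then show False using k1 iy by linarith
      qed
      then obtain z where z: "z \<in> ?B L" "(z,y) \<in> E" by blast
      have "y \<in> ?B (Suc L)" using rball_step[OF z yW] .
      then obtain xs where xs: "is_path E xs" "hd xs = x" "last xs = y" "length xs \<le> Suc L + 1" "set xs \<subseteq> W - S"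
        unfolding rball_def by blast
      have "real (length xs - 1) \<le> real L + 1" using xs(4) by simp
      also have "\<dots> \<le> 40 / \<epsilon>\<^sup>2" using Ld .
      finally show "\<exists>xs. is_path E xs \<and> hd xs = x \<and> last xs = y \<and> real (length xs - 1) \<le> 40 / \<epsilon>\<^sup>2 \<and> set xs \<inter> S = {}"
        using xs by blast
    qed
    have cn: "c * real n \<le> 5/16 * (\<epsilon> * real n)"
    proof -
      have k: "32 * real k \<le> real n * \<epsilon>\<^sup>2" using assms(4) e2pos n_def by (simp add: field_simps)
      have nl: "real n / real L \<le> real n * \<epsilon>\<^sup>2 / 8"
      proof -
        have "real n / real L \<le> real n / (8 / \<epsilon>\<^sup>2)"
          using L1 e2pos Lpos by (intro divide_left_mono) auto
        then show ?thesis by simp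
      qed
      have "c * real n = 2 * (real k + real n / real L) / \<epsilon>" unfolding c_def using npos by simp
      also have "\<dots> \<le> 2 * (real n * \<epsilon>\<^sup>2 / 32 + real n * \<epsilon>\<^sup>2 / 8) / \<epsilon>"
        using k nl assms(1) by (intro divide_right_mono) auto
      also have "\<dots> = 5/16 * (\<epsilon> * real n)" using assms(1) by (simp add: field_simps power2_eq_square)
      finally show ?thesis .
    qed
    have outW: "real (card {y\<in>W. (z,y)\<in>E}) \<ge> real \<delta> - c * real n" if zW: "z \<in> W" for z
    proof -
      have "N z = {y\<in>W. (z,y)\<in>E} \<union> (N z - W)" unfolding N_def by auto
      then have "card (N z) = card ({y\<in>W. (z,y)\<in>E} \<union> (N z - W))" by simp
      also have "\<dots> \<le> card {y\<in>W. (z,y)\<in>E} + card (N z - W)" by (rule card_Un_le)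
      finally have "card (N z) \<le> card {y\<in>W. (z,y)\<in>E} + card (N z - W)" .
      moreover have "\<delta> \<le> card (N z)" using \<delta>le zW WV by blast
      moreover have "real (card (N z - W)) \<le> c * real n"
      proof -
        have "c * (real n - real (card W)) \<le> c * real n" using cpos by (intro mult_left_mono) auto
        then show ?thesis using Wcl[OF zW] by linarith
      qed
      ultimately show ?thesis by linarith
    qed
    have inW: "real (card {z\<in>W. (z,y)\<in>E}) \<le> (if y \<in> A then real (card W) else 0) + \<epsilon> * real n / 2"
      if yW: "y \<in> W" for y
    proof (cases "y \<in> A")
      case True
      have "card {z\<in>W. (z,y)\<in>E} \<le> card W" using finW by (intro card_mono) auto
      moreover have "\<epsilon> * real n / 2 \<ge> 0" using assms(1) by simp
      ultimately show ?thesis using True by simp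
    next
      case False then show ?thesis using yW unfolding A_def by simp
    qed
    have "real (card W) * (real \<delta> - c * real n) \<le> (\<Sum>z\<in>W. real (card {y\<in>W. (z,y)\<in>E}))"
      using outW sum_mono[of W "\<lambda>_. real \<delta> - c * real n"] by simp
    also have "\<dots> = (\<Sum>y\<in>W. real (card {z\<in>W. (z,y)\<in>E}))"
    proof -
      have "(\<Sum>z\<in>W. real (card {y\<in>W. (z,y)\<in>E})) = real (\<Sum>z\<in>W. card {y\<in>W. (z,y)\<in>E})" by simp
      also have "\<dots> = real (\<Sum>y\<in>W. card {z\<in>W. (z,y)\<in>E})" using double_count[OF finW, of E] by simp
      also have "\<dots> = (\<Sum>y\<in>W. real (card {z\<in>W. (z,y)\<in>E}))" by simp
      finally show ?thesis .
    qed
    also have "\<dots> \<le> (\<Sum>y\<in>W. (if y \<in> A then real (card W) else 0) + \<epsilon> * real n / 2)"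
      using inW by (intro sum_mono) auto
    also have "\<dots> = real (card W) * real (card A) + real (card W) * (\<epsilon> * real n / 2)"
    proof -
      have "(\<Sum>y\<in>W. (if y \<in> A then real (card W) else 0)) = (\<Sum>y\<in>A. real (card W))"
        using finW AW by (simp add: sum.If_cases Int_absorb1)
      then show ?thesis by (simp add: sum.distrib)
    qed
    finally have "real (card W) * (real \<delta> - c * real n) \<le> real (card W) * (real (card A) + \<epsilon> * real n / 2)"
      by (simp add: algebra_simps)
    moreover have "card W > 0" using finW Wne by (simp add: card_gt_0_iff)
    ultimately have "real \<delta> - c * real n \<le> real (card A) + \<epsilon> * real n / 2" by simp
    moreover have "\<epsilon> * real n \<ge> 0" using assms(1) by simp
    ultimately have "real (card A) \<ge> real \<delta> - \<epsilon> * real n" using cn by linarith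
    moreover have "A \<subseteq> V" using AW WV by blast
    ultimately show ?thesis using conn unfolding \<delta>_def n_def by blast
  qed
qed

end
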